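(* Consider the two-period setting of the context. (i) Assume that for all $n\in\mathcal N$, $\frac{\hat\ell_n^P}{E_n}+\frac12\ge\frac{\hat\ell^P}{E}$. Then for every $\alpha\in(0,1]$ the unique Nash equilibrium of $\mathcal G^{\mathrm{DP}}_\alpha$ is given by $$\ell_n^P=\hat\ell_n^P+\frac{E_n}{E}\frac{1-\alpha}{2}(\hat\ell^O-\hat\ell^P),\qquad \ell_n^O=\hat\ell_n^O+\frac{E_n}{E}\frac{1-\alpha}{2}(\hat\ell^P-\hat\ell^O),$$ and for $\alpha=0$ every feasible profile whose aggregate peak load satisfies $\ell^P=\frac E2$ is a Nash equilibrium of $\mathcal G^{\mathrm{DP}}_0$. (ii) Assume that for all $n\in\mathcal N$, $2(N-1)\hat\ell_n^P\ge(\hat\ell^P-\hat\ell^O)-E_n$. Then for every $\alpha\in[0,1]$ the unique Nash equilibrium of $\mathcal G^{\mathrm{HP}}_\alpha$ is given by $$\ell_n^P=\hat\ell_n^P+\frac{1-\alpha}{2(1+\alpha)}\Big(\phi(\alpha)(\hat\ell^O-\hat\ell^P)+(\hat\ell_n^O-\hat\ell_n^P)\Big),\qquad \ell_n^O=\hat\ell_n^O+\frac{1-\alpha}{2(1+\alpha)}\Big(\phi(\alpha)(\hat\ell^P-\hat\ell^O)+(\hat\ell_n^P-\hat\ell_n^O)\Big),$$ where $\phi(\alpha)=\frac{2\alpha}{(1+\alpha)+(1-\alpha)N}\in[0,1]$.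
   Context: Two-period setting: users $\mathcal N=\{1,\dots,N\}$, periods $\mathcal H=\{P,O\}$ (peak and off-peak). Each user $n$ has energy demand $E_n>0$ and preferred profile $(\hat\ell_n^P,\hat\ell_n^O)$ with $\hat\ell_n^h\ge0$ and $\hat\ell_n^P+\hat\ell_n^O=E_n$; write $E=\sum_nE_n$, $\hat\ell^h=\sum_n\hat\ell_n^h$, and assume $\hat\ell^P\ge\frac E2\ge\hat\ell^O$. User $n$'s feasible set is $\mathcal L_n=\{(\ell_n^P,\ell_n^O):\ell_n^P+\ell_n^O=E_n,\ \ell_n^P\ge0,\ \ell_n^O\ge0\}$; $\ell^h=\sum_n\ell_n^h$. Costs are $C_h(x)=x^2$ for $h\in\{P,O\}$, utilities $u_n(\boldsymbol\ell_n)=-\sum_{h}(\ell_n^h-\hat\ell_n^h)^2$. DP bill: $b_n^{\mathrm{DP}}=\frac{E_n}{E}\big((\ell^P)^2+(\ell^O)^2\big)$; HP bill: $b_n^{\mathrm{HP}}=\sum_h\frac{\ell_n^h}{\ell^h}(\ell^h)^2=\sum_h\ell_n^h\ell^h$. In $\mathcal G^{\mathrm{DP}}_\alpha$ (resp. $\mathcal G^{\mathrm{HP}}_\alpha$), $\alpha\in[0,1]$, user $n$ minimizes $f_n^\alpha=(1-\alpha)b_n-\alpha u_n(\boldsymbol\ell_n)$ over $\mathcal L_n$ with $b_n=b_n^{\mathrm{DP}}$ (resp. $b_n^{\mathrm{HP}}$), given the others' profiles. A Nash equilibrium is a profile in $\prod_n\mathcal L_n$ from which no user can lower $f_n^\alpha$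 by a unilateral feasible deviation. *)

theory Defs
  imports Complex_Main
begin

text \<open>Users are indexed by 0..<N. A load profile is a pair of functions
  lP lO :: nat => real (peak / off-peak loads); only values at indices < N matter.\<close>

definition feasible_user :: "(nat \<Rightarrow> real) \<Rightarrow> nat \<Rightarrow> real \<Rightarrow> real \<Rightarrow> bool" where
  "feasible_user E n x y \<longleftrightarrow> x + y = E n \<and> x \<ge> 0 \<and> y \<ge> 0"

definition feasible_profile ::
  "nat \<Rightarrow> (nat \<Rightarrow> real) \<Rightarrow> (nat \<Rightarrow> real) \<Rightarrow> (nat \<Rightarrow> real) \<Rightarrow> bool" where
  "feasible_profile N E lP lO \<longleftrightarrow> (\<forall>n<N. feasible_user E n (lP n) (lO n))"

definition total :: "nat \<Rightarrow> (nat \<Rightarrow> real) \<Rightarrow> real" where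
  "total N f = (\<Sum>n<N. f n)"

text \<open>DP bill: E_n/E * ((l^P)^2 + (l^O)^2), costs C_h(x) = x^2.\<close>
definition bill_DP ::
  "nat \<Rightarrow> (nat \<Rightarrow> real) \<Rightarrow> (nat \<Rightarrow> real) \<Rightarrow> (nat \<Rightarrow> real) \<Rightarrow> nat \<Rightarrow> real" where
  "bill_DP N E lP lO n = E n / total N E * ((total N lP)^2 + (total N lO)^2)"

definition bill_HP ::
  "nat \<Rightarrow> (nat \<Rightarrow> real) \<Rightarrow> (nat \<Rightarrow> real) \<Rightarrow> (nat \<Rightarrow> real) \<Rightarrow> nat \<Rightarrow> real" where
  "bill_HP N E lP lO n = lP n * total N lP + lO n * total N lO"

definition utility ::
  "(nat \<Rightarrow> real) \<Rightarrow> (nat \<Rightarrow> real) \<Rightarrow> (nat \<Rightarrow> real) \<Rightarrow> (nat \<Rightarrow> real) \<Rightarrow> nat \<Rightarrow> real" where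
  "utility hP hO lP lO n = - ((lP n - hP n)^2 + (lO n - hO n)^2)"

definition objective ::
  "(nat \<Rightarrow> (nat \<Rightarrow> real) \<Rightarrow> (nat \<Rightarrow> real) \<Rightarrow> (nat \<Rightarrow> real) \<Rightarrow> nat \<Rightarrow> real)
   \<Rightarrow> nat \<Rightarrow> (nat \<Rightarrow> real) \<Rightarrow> (nat \<Rightarrow> real) \<Rightarrow> (nat \<Rightarrow> real) \<Rightarrow> real
   \<Rightarrow> (nat \<Rightarrow> real) \<Rightarrow> (nat \<Rightarrow> real) \<Rightarrow> nat \<Rightarrow> real" where
  "objective bill N E hP hO \<alpha> lP lO n =
     (1 - \<alpha>) * bill N E lP lO n - \<alpha> * utility hP hO lP lO n"

definition is_NE ::
  "(nat \<Rightarrow> (nat \<Rightarrow> real) \<Rightarrow> (nat \<Rightarrow> real) \<Rightarrow> (nat \<Rightarrow> real) \<Rightarrow> nat \<Rightarrow> real)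
   \<Rightarrow> nat \<Rightarrow> (nat \<Rightarrow> real) \<Rightarrow> (nat \<Rightarrow> real) \<Rightarrow> (nat \<Rightarrow> real) \<Rightarrow> real
   \<Rightarrow> (nat \<Rightarrow> real) \<Rightarrow> (nat \<Rightarrow> real) \<Rightarrow> bool" where
  "is_NE bill N E hP hO \<alpha> lP lO \<longleftrightarrow>
     feasible_profile N E lP lO \<and>
     (\<forall>n<N. \<forall>x y. feasible_user E n x y \<longrightarrow>
        objective bill N E hP hO \<alpha> lP lO n
          \<le> objective bill N E hP hO \<alpha> (lP(n := x)) (lO(n := y)) n)"

definition phi :: "nat \<Rightarrow> real \<Rightarrow> real" where
  "phi N \<alpha> = 2 * \<alpha> / ((1 + \<alpha>) + (1 - \<alpha>) * real N)"

end

theory Submission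
  imports Defs
begin


lemma total_upd:
  assumes "n < N"
  shows "total N (f(n:=x)) = total N f - f n + x"
proof -
  have "(\<Sum>i<N. (f(n:=x)) i) = (\<Sum>i<N. f i + (if i = n then x - f n else 0))"
    by (rule sum.cong) auto
  also have "\<dots> = (\<Sum>i<N. f i) + (x - f n)"
    using assms by (simp add: sum.distrib)
  finally show ?thesis unfolding total_def by simp
qed

lemma total_O:
  assumes "feasible_profile N E lP lO"
  shows "total N lO = total N E - total N lP"
proof -
  have "(\<Sum>i<N. E i) = (\<Sum>i<N. lP i + lO i)"
    using assms by (intro sum.cong) (auto simp: feasible_profile_def feasible_user_def)
  thus ?thesis unfolding total_def by (simp add: sum.distrib)
qed

lemma quad_nonneg:
  fixes a b :: real
  assumes a: "a \<ge> 0" and h: "\<forall>t. 0 < t \<and> t \<le> 1 \<longrightarrow> b*t + a*t^2 \<ge> 0"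
  shows "b \<ge> 0"
proof (rule ccontr)
  assume "\<not> b \<ge> 0" hence b: "b < 0" by simp
  show False
  proof (cases "a = 0")
    case True thus False using h[rule_format, of 1] b by simp
  next
    case False
    hence ap: "a > 0" using a by simp
    define t where "t = min 1 (-b/(2*a))"
    have t0: "0 < t" using ap b by (simp add: t_def divide_neg_pos)
    have t1: "t \<le> 1" by (simp add: t_def)
    have "a*t \<le> a*(-b/(2*a))" using ap by (intro mult_left_mono) (auto simp: t_def)
    also have "\<dots> = -b/2" using ap by simp
    finally have "b + a*t < 0" using b by simp
    hence "t*(b + a*t) < 0" using t0 by (simp add: mult_pos_neg)
    hence "b*t + a*t^2 < 0" by (simp add: power2_eq_square algebra_simps)
    thus False using h t0 t1 by force
  qed
qed

lemma delta_zero: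
  fixes \<delta> c :: "nat \<Rightarrow> real" and a S :: real
  assumes a: "a > 0" and c: "\<forall>n<N. c n \<ge> 0"
    and h: "\<forall>n<N. (c n * S + a * \<delta> n) * \<delta> n \<le> 0"
    and S: "S = (\<Sum>n<N. \<delta> n)"
  shows "\<forall>n<N. \<delta> n = 0"
proof -
  have S0: "S = 0"
  proof (rule ccontr)
    assume "S \<noteq> 0"
    then consider "S > 0" | "S < 0" by linarith
    thus False
    proof cases
      case 1
      have "\<forall>n<N. \<delta> n \<le> 0"
      proof (intro allI impI, rule ccontr)
        fix n assume n: "n < N" "\<not> \<delta> n \<le> 0"
        have "c n * S * \<delta> n \<ge> 0" using c n 1 by simp
        moreover have "a * \<delta> n * \<delta> n > 0" using a n by simp
        ultimately show False using h[rule_format, OF n(1)] by (simp add: algebra_simps)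
      qed
      hence "S \<le> 0" unfolding S by (intro sum_nonpos) simp
      thus False using 1 by simp
    next
      case 2
      have "\<forall>n<N. \<delta> n \<ge> 0"
      proof (intro allI impI, rule ccontr)
        fix n assume n: "n < N" "\<not> \<delta> n \<ge> 0"
        have "c n * S \<le> 0" using c n 2 by (simp add: mult_nonneg_nonpos)
        hence "c n * S * \<delta> n \<ge> 0" using n by (simp add: mult_nonpos_nonpos)
        moreover have "\<delta> n * \<delta> n > 0" using n by (simp add: mult_neg_neg)
        hence "a * \<delta> n * \<delta> n > 0" using a by (simp add: mult.assoc)
        ultimately show False using h[rule_format, OF n(1)] by (simp add: algebra_simps)
      qed
      hence "S \<ge> 0" unfolding S by (intro sum_nonneg) simp
      thus False using 2 by simp
    qed
  qed
  show ?thesis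
  proof (intro allI impI)
    fix n assume n: "n < N"
    have "a * (\<delta> n * \<delta> n) \<le> 0" using h n S0 by (simp add: algebra_simps)
    hence "\<delta> n * \<delta> n \<le> 0" using a by (simp add: mult_le_0_iff)
    thus "\<delta> n = 0" by (metis mult_eq_0_iff not_square_less_zero order_antisym_conv zero_le_square)
  qed
qed

lemma NE_VI:
  assumes ne: "is_NE bill N E hP hO \<alpha> lP lO" and n: "n < N"
    and dev: "\<forall>x y. x + y = E n \<longrightarrow>
       objective bill N E hP hO \<alpha> (lP(n:=x)) (lO(n:=y)) n - objective bill N E hP hO \<alpha> lP lO n
       = (x - lP n) * D + (x - lP n)^2 * A"
    and A: "A \<ge> 0" and y: "0 \<le> y" "y \<le> E n"
  shows "D * (y - lP n) \<ge> 0"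
proof -
  have fe: "lP n + lO n = E n" "lP n \<ge> 0" "lO n \<ge> 0"
    using ne n by (auto simp: is_NE_def feasible_profile_def feasible_user_def)
  have "\<forall>t. 0 < t \<and> t \<le> 1 \<longrightarrow> ((y - lP n)*D)*t + ((y - lP n)^2*A)*t^2 \<ge> 0"
  proof (intro allI impI)
    fix t :: real assume t: "0 < t \<and> t \<le> 1"
    define x where "x = (1 - t) * lP n + t * y"
    have x0: "x \<ge> 0" using t fe y unfolding x_def by simp
    have "x \<le> (1 - t) * E n + t * E n" unfolding x_def using t fe y
      by (intro add_mono mult_left_mono) auto
    hence x1: "x \<le> E n" by (simp add: algebra_simps)
    have fu: "feasible_user E n x (E n - x)" using x0 x1 by (simp add: feasible_user_def)
    have le: "objective bill N E hP hO \<alpha> lP lO n \<le> objective bill N E hP hO \<alpha> (lP(n:=x)) (lO(n:=E n - x)) n"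
      using ne n fu unfolding is_NE_def by blast
    have "x - lP n = t * (y - lP n)" unfolding x_def by (simp add: algebra_simps)
    with dev[rule_format, of x "E n - x"] le
    have "0 \<le> (t * (y - lP n)) * D + (t * (y - lP n))^2 * A" by simp
    thus "0 \<le> ((y - lP n)*D)*t + ((y - lP n)^2*A)*t^2" by (simp add: power2_eq_square algebra_simps)
  qed
  moreover have "(y - lP n)^2 * A \<ge> 0" using A by simp
  ultimately have "(y - lP n) * D \<ge> 0" using quad_nonneg by blast
  thus ?thesis by (simp add: mult.commute)
qed

lemma NE_intro:
  assumes fp: "feasible_profile N E lP lO"
    and dev: "\<forall>n<N. \<forall>x y. x + y = E n \<longrightarrow>
       objective bill N E hP hO \<alpha> (lP(n:=x)) (lO(n:=y)) n - objective bill N E hP hO \<alpha> lP lO n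
       = (x - lP n) * D n + (x - lP n)^2 * A n"
    and D: "\<forall>n<N. D n = 0" and A: "\<forall>n<N. A n \<ge> 0"
  shows "is_NE bill N E hP hO \<alpha> lP lO"
  unfolding is_NE_def
proof (intro conjI fp allI impI)
  fix n x y assume n: "n < N" and fu: "feasible_user E n x y"
  hence "x + y = E n" by (simp add: feasible_user_def)
  with dev n D have "objective bill N E hP hO \<alpha> (lP(n:=x)) (lO(n:=y)) n - objective bill N E hP hO \<alpha> lP lO n
       = (x - lP n)^2 * A n" by simp
  moreover have "(x - lP n)^2 * A n \<ge> 0" using A n by simp
  ultimately show "objective bill N E hP hO \<alpha> lP lO n \<le> objective bill N E hP hO \<alpha> (lP(n:=x)) (lO(n:=y)) n"
    by simp
qed

lemma dev_DP:
  assumes fp: "feasible_profile N E lP lO" and n: "n < N" and h: "hP n + hO n = E n"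
  shows "\<forall>x y. x + y = E n \<longrightarrow>
     objective bill_DP N E hP hO \<alpha> (lP(n:=x)) (lO(n:=y)) n - objective bill_DP N E hP hO \<alpha> lP lO n
     = (x - lP n) * (2*(1-\<alpha>)*(E n / total N E)*(2*total N lP - total N E) + 4*\<alpha>*(lP n - hP n))
       + (x - lP n)^2 * (2*(1-\<alpha>)*(E n / total N E) + 2*\<alpha>)"
proof (intro allI impI)
  fix x y assume xy: "x + y = E n"
  have tO: "total N lO = total N E - total N lP" using total_O[OF fp] .
  have ln: "lO n = E n - lP n" using fp n by (auto simp: feasible_profile_def feasible_user_def)
  have y: "y = E n - x" using xy by simp
  have hO: "hO n = E n - hP n" using h by simp
  define c where "c = E n / total N E"
  show "objective bill_DP N E hP hO \<alpha> (lP(n:=x)) (lO(n:=y)) n - objective bill_DP N E hP hO \<alpha> lP lO n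
     = (x - lP n) * (2*(1-\<alpha>)*(E n / total N E)*(2*total N lP - total N E) + 4*\<alpha>*(lP n - hP n))
       + (x - lP n)^2 * (2*(1-\<alpha>)*(E n / total N E) + 2*\<alpha>)"
    unfolding objective_def bill_DP_def utility_def total_upd[OF n] tO ln y hO c_def[symmetric]
    by (simp add: power2_eq_square algebra_simps)
qed

lemma dev_HP:
  assumes fp: "feasible_profile N E lP lO" and n: "n < N" and h: "hP n + hO n = E n"
  shows "\<forall>x y. x + y = E n \<longrightarrow>
     objective bill_HP N E hP hO \<alpha> (lP(n:=x)) (lO(n:=y)) n - objective bill_HP N E hP hO \<alpha> lP lO n
     = (x - lP n) * ((1-\<alpha>)*(2*total N lP - total N E + 2*lP n - E n) + 4*\<alpha>*(lP n - hP n))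
       + (x - lP n)^2 * 2"
proof (intro allI impI)
  fix x y assume xy: "x + y = E n"
  have tO: "total N lO = total N E - total N lP" using total_O[OF fp] .
  have ln: "lO n = E n - lP n" using fp n by (auto simp: feasible_profile_def feasible_user_def)
  have y: "y = E n - x" using xy by simp
  have hO: "hO n = E n - hP n" using h by simp
  show "objective bill_HP N E hP hO \<alpha> (lP(n:=x)) (lO(n:=y)) n - objective bill_HP N E hP hO \<alpha> lP lO n
     = (x - lP n) * ((1-\<alpha>)*(2*total N lP - total N E + 2*lP n - E n) + 4*\<alpha>*(lP n - hP n))
       + (x - lP n)^2 * 2"
    unfolding objective_def bill_HP_def utility_def total_upd[OF n] tO ln y hO
    by (simp add: power2_eq_square algebra_simps)
qed


lemma total_E:
  assumes h_sum: "\<And>n. n < N \<Longrightarrow> hP n + hO n = E n"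
  shows "total N E = total N hP + total N hO"
proof -
  have "(\<Sum>i<N. E i) = (\<Sum>i<N. hP i + hO i)" using h_sum by (intro sum.cong) auto
  thus ?thesis unfolding total_def by (simp add: sum.distrib)
qed

lemma total_pos:
  assumes E_pos: "\<And>n. n < N \<Longrightarrow> E n > 0" and "n < N"
  shows "total N E > 0"
  unfolding total_def using assms by (intro sum_pos) auto

lemma total_nonneg:
  assumes E_pos: "\<And>n. n < N \<Longrightarrow> E n > 0"
  shows "total N E \<ge> 0"
  unfolding total_def using assms by (intro sum_nonneg) (auto intro: less_imp_le)

lemma total_diff: "total N f - total N g = (\<Sum>n<N. f n - g n)"
  unfolding total_def by (simp add: sum_subtractf)

lemma part1a:
  fixes N :: nat and E hP hO :: "nat \<Rightarrow> real"
  assumes E_pos: "\<And>n. n < N \<Longrightarrow> E n > 0"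
    and hP_nonneg: "\<And>n. n < N \<Longrightarrow> hP n \<ge> 0"
    and hO_nonneg: "\<And>n. n < N \<Longrightarrow> hO n \<ge> 0"
    and h_sum: "\<And>n. n < N \<Longrightarrow> hP n + hO n = E n"
    and peak: "total N hP \<ge> total N E / 2" "total N E / 2 \<ge> total N hO"
    and H: "\<forall>n<N. hP n / E n + 1/2 \<ge> total N hP / total N E"
    and a0: "0 < \<alpha>" and a1: "\<alpha> \<le> 1"
    and sP_def: "sP = (\<lambda>n. hP n + E n / total N E * ((1 - \<alpha>) / 2) * (total N hO - total N hP))"
    and sO_def: "sO = (\<lambda>n. hO n + E n / total N E * ((1 - \<alpha>) / 2) * (total N hP - total N hO))"
  shows "is_NE bill_DP N E hP hO \<alpha> sP sO \<and>
         (\<forall>lP lO. is_NE bill_DP N E hP hO \<alpha> lP lO \<longrightarrow> (\<forall>n<N. lP n = sP n \<and> lO n = sO n))"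
proof -
  have TE: "total N E = total N hP + total N hO" using total_E h_sum by blast
  have g0: "total N hP - total N hO \<ge> 0" using TE peak by simp
  have sum_s: "sP n + sO n = E n" if "n < N" for n
  proof -
    have z: "\<And>c a b::real. c*(a-b) + c*(b-a) = 0" by (simp add: algebra_simps)
    show ?thesis using h_sum[OF that] z[of "E n / total N E * ((1 - \<alpha>) / 2)" "total N hO" "total N hP"]
      unfolding sP_def sO_def by linarith
  qed
  have fp: "feasible_profile N E sP sO"
    unfolding feasible_profile_def feasible_user_def
  proof (intro allI impI conjI)
    fix n assume n: "n < N"
    show "sP n + sO n = E n" using sum_s n .
    have T: "total N E > 0" using total_pos[OF E_pos n] .
    have En: "E n > 0" using E_pos n .
    have "hP n / E n \<ge> (total N hP - total N hO) / (2 * total N E)"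
      using H n TE T by (simp add: field_simps)
    hence q1: "hP n \<ge> E n * ((total N hP - total N hO) / (2 * total N E))"
      using En by (simp add: field_simps)
    have q2: "E n * ((total N hP - total N hO) / (2 * total N E))
        \<ge> E n / total N E * ((1 - \<alpha>) / 2) * (total N hP - total N hO)"
    proof -
      have "E n / total N E * ((1 - \<alpha>) / 2) * (total N hP - total N hO)
          = (1 - \<alpha>) * (E n * ((total N hP - total N hO) / (2 * total N E)))"
        by (simp add: field_simps)
      also have "\<dots> \<le> 1 * (E n * ((total N hP - total N hO) / (2 * total N E)))"
        using a0 a1 En T g0 by (intro mult_right_mono) auto
      finally show ?thesis by simp
    qed
    have "hP n \<ge> E n / total N E * ((1 - \<alpha>) / 2) * (total N hP - total N hO)" using q1 q2 by linarith
    moreover have "\<And>c a b::real. c*(a-b) = -(c*(b-a))" by (simp add: algebra_simps)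
    ultimately show "0 \<le> sP n" unfolding sP_def by (metis add.commute diff_ge_0_iff_ge diff_minus_eq_add)
    show "0 \<le> sO n" unfolding sO_def using hO_nonneg[OF n] En T g0 a1
      by (intro add_nonneg_nonneg mult_nonneg_nonneg) auto
  qed
  define DD where "DD = (\<lambda>(lP::nat\<Rightarrow>real) n. 2*(1-\<alpha>)*(E n / total N E)*(2*total N lP - total N E) + 4*\<alpha>*(lP n - hP n))"
  define AA where "AA = (\<lambda>n. 2*(1-\<alpha>)*(E n / total N E) + 2*\<alpha>)"
  have AA: "AA n \<ge> 0" if "n < N" for n
    unfolding AA_def using a0 a1 total_nonneg[OF E_pos] E_pos[OF that] by simp
  have dev: "\<forall>x y. x + y = E n \<longrightarrow>
     objective bill_DP N E hP hO \<alpha> (lP(n:=x)) (lO(n:=y)) n - objective bill_DP N E hP hO \<alpha> lP lO n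
     = (x - lP n) * DD lP n + (x - lP n)^2 * AA n"
    if "feasible_profile N E lP lO" "n < N" for lP lO n
    using dev_DP[where hP=hP and hO=hO and \<alpha>=\<alpha>, OF that h_sum[OF that(2)]] unfolding DD_def AA_def by simp
  have tsP: "total N sP = total N hP + ((1 - \<alpha>) / 2) * (total N hO - total N hP)" if "0 < N"
  proof -
    have T: "total N E > 0" using total_pos[OF E_pos that] .
    have a: "(\<Sum>n<N. E n / total N E * ((1 - \<alpha>) / 2) * (total N hO - total N hP))
       = (\<Sum>n<N. E n / total N E) * ((1 - \<alpha>) / 2) * (total N hO - total N hP)"
      by (simp only: sum_distrib_right)
    have b: "(\<Sum>n<N. E n / total N E) = 1"
      using T by (simp add: sum_divide_distrib[symmetric] total_def)
    have c: "total N sP = (\<Sum>n<N. hP n) + (\<Sum>n<N. E n / total N E * ((1 - \<alpha>) / 2) * (total N hO - total N hP))"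
      unfolding sP_def by (simp only: total_def sum.distrib)
    show ?thesis unfolding c a b by (simp add: total_def)
  qed
  have Ds: "DD sP n = 0" if n: "n < N" for n
  proof -
    have "0 < N" using n by simp
    note ts = tsP[OF this]
    define c where "c = E n / total N E"
    have sPn: "sP n - hP n = c * ((1-\<alpha>)/2) * (total N hO - total N hP)" by (simp add: sP_def c_def)
    have gen: "\<And>c a X Y::real. 2*(1-a)*c*(2*(X + (1-a)/2*(Y-X)) - (X+Y)) + 4*a*(c*((1-a)/2)*(Y-X)) = 0"
      by (simp add: field_simps)
    show ?thesis unfolding DD_def ts c_def[symmetric] sPn
      using gen[of \<alpha> c "total N hP" "total N hO"] TE by simp
  qed
  have NEs: "is_NE bill_DP N E hP hO \<alpha> sP sO"
    by (rule NE_intro[OF fp, where D="DD sP" and A=AA]) (use dev[OF fp] Ds AA in auto)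
  have uniq: "\<forall>n<N. lP n = sP n \<and> lO n = sO n" if ne: "is_NE bill_DP N E hP hO \<alpha> lP lO" for lP lO
  proof -
    have fpl: "feasible_profile N E lP lO" using ne by (simp add: is_NE_def)
    have key: "((1-\<alpha>)*(E n / total N E) * (total N lP - total N sP) + \<alpha> * (lP n - sP n)) * (lP n - sP n) \<le> 0"
      if n: "n < N" for n
    proof -
      have s01: "0 \<le> sP n" "sP n \<le> E n" using fp n sum_s[OF n]
        by (auto simp: feasible_profile_def feasible_user_def)
      have l01: "0 \<le> lP n" "lP n \<le> E n" using fpl n
        by (auto simp: feasible_profile_def feasible_user_def)
      have v1: "DD lP n * (sP n - lP n) \<ge> 0"
        by (rule NE_VI[OF ne n dev[OF fpl n] AA[OF n] s01])
      have v2: "DD sP n * (lP n - sP n) \<ge> 0"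
        by (rule NE_VI[OF NEs n dev[OF fp n] AA[OF n] l01])
      have "(DD lP n - DD sP n) * (lP n - sP n) \<le> 0" using v1 v2 by (simp add: algebra_simps)
      moreover have "DD lP n - DD sP n = 4 * ((1-\<alpha>)*(E n / total N E) * (total N lP - total N sP) + \<alpha> * (lP n - sP n))"
      proof -
        have gen: "\<And>c a P Q T l s h::real. (2*(1-a)*c*(2*P - T) + 4*a*(l-h)) - (2*(1-a)*c*(2*Q-T) + 4*a*(s-h))
           = 4*((1-a)*c*(P-Q) + a*(l-s))" by (simp add: algebra_simps)
        show ?thesis unfolding DD_def using gen[of \<alpha> "E n / total N E"] by simp
      qed
      ultimately have "4 * (((1-\<alpha>)*(E n / total N E) * (total N lP - total N sP) + \<alpha> * (lP n - sP n)) * (lP n - sP n)) \<le> 0"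
        by (metis mult.assoc)
      thus ?thesis by linarith
    qed
    have cn: "\<forall>n<N. (1-\<alpha>)*(E n / total N E) \<ge> 0"
    proof (intro allI impI)
      fix n assume n: "n < N"
      have "E n / total N E \<ge> 0" using E_pos[OF n] total_nonneg[OF E_pos] by simp
      thus "(1-\<alpha>)*(E n / total N E) \<ge> 0" using a1 by (intro mult_nonneg_nonneg) auto
    qed
    have z: "\<forall>n<N. lP n - sP n = 0"
      by (rule delta_zero[where c="\<lambda>n. (1-\<alpha>)*(E n / total N E)" and a=\<alpha> and S="total N lP - total N sP"])
         (use key a0 cn total_diff in auto)
    show ?thesis
    proof (intro allI impI conjI)
      fix n assume n: "n < N"
      show "lP n = sP n" using z n by simp
      have "lO n = E n - lP n" using fpl n by (auto simp: feasible_profile_def feasible_user_def)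
      thus "lO n = sO n" using sum_s[OF n] z n by simp
    qed
  qed
  show ?thesis using NEs uniq by blast
qed

lemma part1b:
  fixes N :: nat and E hP hO :: "nat \<Rightarrow> real"
  assumes E_pos: "\<And>n. n < N \<Longrightarrow> E n > 0"
    and h_sum: "\<And>n. n < N \<Longrightarrow> hP n + hO n = E n"
    and fp: "feasible_profile N E lP lO" and tP: "total N lP = total N E / 2"
  shows "is_NE bill_DP N E hP hO 0 lP lO"
proof (rule NE_intro[OF fp, where D="\<lambda>n. 2*(1-0)*(E n / total N E)*(2*total N lP - total N E) + 4*0*(lP n - hP n)"
      and A="\<lambda>n. 2*(1-0)*(E n / total N E) + 2*0"])
  show "\<forall>n<N. \<forall>x y. x + y = E n \<longrightarrow>
       objective bill_DP N E hP hO 0 (lP(n:=x)) (lO(n:=y)) n - objective bill_DP N E hP hO 0 lP lO n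
       = (x - lP n) * (2*(1-0)*(E n / total N E)*(2*total N lP - total N E) + 4*0*(lP n - hP n))
         + (x - lP n)^2 * (2*(1-0)*(E n / total N E) + 2*0)"
  proof (intro allI impI)
    fix n x y assume n: "n < N" and xy: "x + y = E n"
    show "objective bill_DP N E hP hO 0 (lP(n:=x)) (lO(n:=y)) n - objective bill_DP N E hP hO 0 lP lO n
       = (x - lP n) * (2*(1-0)*(E n / total N E)*(2*total N lP - total N E) + 4*0*(lP n - hP n))
         + (x - lP n)^2 * (2*(1-0)*(E n / total N E) + 2*0)"
      using dev_DP[where hP=hP and hO=hO and \<alpha>=0, OF fp n h_sum[OF n]] xy by blast
  qed
  show "\<forall>n<N. 2*(1-0)*(E n / total N E)*(2*total N lP - total N E) + 4*0*(lP n - hP n) = (0::real)"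
    using tP by simp
  show "\<forall>n<N. 2*(1-0)*(E n / total N E) + 2*0 \<ge> (0::real)"
  proof (intro allI impI)
    fix n assume n: "n < N"
    have "E n / total N E \<ge> 0" using E_pos[OF n] total_nonneg[OF E_pos] by simp
    thus "2*(1-0)*(E n / total N E) + 2*0 \<ge> (0::real)" by simp
  qed
qed


lemma phi_facts:
  assumes a0: "0 \<le> \<alpha>" and a1: "\<alpha> \<le> (1::real)"
  shows "(1+\<alpha>)+(1-\<alpha>)*real N > 0" "phi N \<alpha> * ((1+\<alpha>)+(1-\<alpha>)*real N) = 2*\<alpha>"
    "0 \<le> phi N \<alpha>" "phi N \<alpha> \<le> 1"
proof -
  have "(1-\<alpha>)*real N \<ge> 0" using a1 by simp
  thus den: "(1+\<alpha>)+(1-\<alpha>)*real N > 0" using a0 by linarith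
  thus "phi N \<alpha> * ((1+\<alpha>)+(1-\<alpha>)*real N) = 2*\<alpha>" unfolding phi_def by simp
  show "0 \<le> phi N \<alpha>" unfolding phi_def using den a0 by simp
  have "2*\<alpha> \<le> (1+\<alpha>)+(1-\<alpha>)*real N" using a1 \<open>(1-\<alpha>)*real N \<ge> 0\<close> by linarith
  thus "phi N \<alpha> \<le> 1" unfolding phi_def using den by simp
qed

lemma part2:
  fixes N :: nat and E hP hO :: "nat \<Rightarrow> real"
  assumes E_pos: "\<And>n. n < N \<Longrightarrow> E n > 0"
    and hP_nonneg: "\<And>n. n < N \<Longrightarrow> hP n \<ge> 0"
    and hO_nonneg: "\<And>n. n < N \<Longrightarrow> hO n \<ge> 0"
    and h_sum: "\<And>n. n < N \<Longrightarrow> hP n + hO n = E n"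
    and peak: "total N hP \<ge> total N E / 2" "total N E / 2 \<ge> total N hO"
    and H: "\<forall>n<N. 2 * (real N - 1) * hP n \<ge> (total N hP - total N hO) - E n"
    and a0: "0 \<le> \<alpha>" and a1: "\<alpha> \<le> 1"
    and k_def: "k = (1 - \<alpha>) / (2 * (1 + \<alpha>))" and p_def: "p = phi N \<alpha>"
    and sP_def: "sP = (\<lambda>n. hP n + k * (p * (total N hO - total N hP) + (hO n - hP n)))"
    and sO_def: "sO = (\<lambda>n. hO n + k * (p * (total N hP - total N hO) + (hP n - hO n)))"
  shows "is_NE bill_HP N E hP hO \<alpha> sP sO \<and>
         (\<forall>lP lO. is_NE bill_HP N E hP hO \<alpha> lP lO \<longrightarrow> (\<forall>n<N. lP n = sP n \<and> lO n = sO n))"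
proof -
  define den where "den = (1+\<alpha>)+(1-\<alpha>)*real N"
  have den: "den > 0" "p * den = 2*\<alpha>" "0 \<le> p" "p \<le> 1"
    using phi_facts[OF a0 a1, of N] unfolding den_def p_def by auto
  have k: "k * (2*(1+\<alpha>)) = 1-\<alpha>" "0 \<le> k" "k \<le> 1/2" using a0 a1 unfolding k_def by (auto simp: field_simps)
  have TE: "total N E = total N hP + total N hO" using total_E h_sum by blast
  have g0: "total N hP - total N hO \<ge> 0" using TE peak by simp
  have sum_s: "sP n + sO n = E n" if "n < N" for n
  proof -
    have z: "\<And>k p X Y a b::real. k*(p*(Y-X) + (b-a)) + k*(p*(X-Y) + (a-b)) = 0" by (simp add: algebra_simps)
    show ?thesis using h_sum[OF that] z[of k p "total N hP" "total N hO" "hP n" "hO n"]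
      unfolding sP_def sO_def by linarith
  qed
  have fp: "feasible_profile N E sP sO"
    unfolding feasible_profile_def feasible_user_def
  proof (intro allI impI conjI)
    fix n assume n: "n < N"
    show "sP n + sO n = E n" using sum_s n .
    define g where "g = total N hP - total N hO"
    have hp: "hP n \<ge> 0" and ho: "hO n \<ge> 0" using hP_nonneg hO_nonneg n by auto
    have kp: "k * p \<ge> 0" using k den by simp
    have N1: "real N \<ge> 1" using n by simp
    have Hn: "g \<le> (2 * real N - 1) * hP n + hO n"
    proof -
      have "(2 * real N - 1) * hP n + hO n = 2*(real N - 1)*hP n + E n"
        using h_sum[OF n] by (simp add: algebra_simps)
      thus ?thesis using H[rule_format, OF n] unfolding g_def by linarith
    qed
    have i1: "k * p * g \<le> k * p * ((2 * real N - 1) * hP n + hO n)"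
      using mult_left_mono[OF Hn kp] .
    have ineq: "(1-\<alpha>)*(2*\<alpha>)*(2*real N - 1) \<le> (1+3*\<alpha>)*den"
    proof -
      have "(1+3*\<alpha>)*den - (1-\<alpha>)*(2*\<alpha>)*(2*real N - 1)
          = (1+3*\<alpha>)*(1+\<alpha>) + 2*\<alpha>*(1-\<alpha>) + real N*(1-\<alpha>)^2"
        unfolding den_def by (simp add: algebra_simps power2_eq_square)
      moreover have "(1+3*\<alpha>)*(1+\<alpha>) + 2*\<alpha>*(1-\<alpha>) + real N*(1-\<alpha>)^2 \<ge> 0"
        using a0 a1 by (intro add_nonneg_nonneg mult_nonneg_nonneg) auto
      ultimately show ?thesis by linarith
    qed
    have M: "2*(1+\<alpha>)*den > 0" using den a0 by simp
    have "(k*p*(2*real N - 1)) * (2*(1+\<alpha>)*den) = (k*(2*(1+\<alpha>)))*(p*den)*(2*real N - 1)"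
      by (simp add: algebra_simps)
    also have "\<dots> = (1-\<alpha>)*(2*\<alpha>)*(2*real N - 1)" using k den by simp
    also have "\<dots> \<le> (1+3*\<alpha>)*den" by (rule ineq)
    also have "\<dots> = (1-k)*(2*(1+\<alpha>)*den)"
    proof -
      have "(1-k)*(2*(1+\<alpha>)*den) = (2*(1+\<alpha>) - k*(2*(1+\<alpha>)))*den" by (simp add: algebra_simps)
      also have "\<dots> = (2*(1+\<alpha>) - (1-\<alpha>))*den" by (simp only: k(1))
      also have "\<dots> = (1+3*\<alpha>)*den" by (simp add: algebra_simps)
      finally show ?thesis by (rule sym)
    qed
    finally have key: "k*p*(2*real N - 1) \<le> 1-k" using M by (metis mult_le_cancel_right_pos)
    have i2: "k*p*(2*real N - 1)*hP n \<le> (1-k)*hP n" using key hp by (rule mult_right_mono)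
    have i3: "k*p*hO n \<le> k*hO n"
    proof -
      have "k*hO n*p \<le> k*hO n*1" using den k ho by (intro mult_left_mono) auto
      thus ?thesis by (simp add: algebra_simps)
    qed
    have "k * p * g \<le> (1-k)*hP n + k*hO n" using i1 i2 i3 by (simp add: algebra_simps)
    moreover have "sP n = (1-k)*hP n + k*hO n - k*p*g" unfolding sP_def g_def by (simp add: algebra_simps)
    ultimately show "0 \<le> sP n" by simp
    have "sO n = (1-k)*hO n + k*hP n + k*p*g" unfolding sO_def g_def by (simp add: algebra_simps)
    moreover have "k*p*g \<ge> 0" using kp g0 unfolding g_def by simp
    moreover have "(1-k)*hO n \<ge> 0" "k*hP n \<ge> 0" using k hp ho by auto
    ultimately show "0 \<le> sO n" by simp
  qed
  define DD where "DD = (\<lambda>(lP::nat\<Rightarrow>real) n. (1-\<alpha>)*(2*total N lP - total N E + 2*lP n - E n) + 4*\<alpha>*(lP n - hP n))"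
  define AA where "AA = (\<lambda>n::nat. 2::real)"
  have AA: "AA n \<ge> 0" for n unfolding AA_def by simp
  have dev: "\<forall>x y. x + y = E n \<longrightarrow>
     objective bill_HP N E hP hO \<alpha> (lP(n:=x)) (lO(n:=y)) n - objective bill_HP N E hP hO \<alpha> lP lO n
     = (x - lP n) * DD lP n + (x - lP n)^2 * AA n"
    if "feasible_profile N E lP lO" "n < N" for lP lO n
    using dev_HP[where hP=hP and hO=hO and \<alpha>=\<alpha>, OF that h_sum[OF that(2)]] unfolding DD_def AA_def by simp
  have tsP: "total N sP = total N hP + k * (real N * p * (total N hO - total N hP) + (total N hO - total N hP))"
  proof -
    have "total N sP = (\<Sum>n<N. hP n) + k * ((\<Sum>n<N. p * (total N hO - total N hP)) + ((\<Sum>n<N. hO n) - (\<Sum>n<N. hP n)))"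
      unfolding sP_def by (simp only: total_def sum.distrib sum_distrib_left[symmetric] sum_subtractf)
    thus ?thesis by (simp add: total_def)
  qed
  have Ds: "DD sP n = 0" if n: "n < N" for n
  proof -
    have gen: "\<And>a k p N X Y hp ho::real.
       (1-a)*(2*(X + k*(N*p*(Y-X) + (Y-X))) - (X+Y) + 2*(hp + k*(p*(Y-X)+(ho-hp))) - (hp+ho))
         + 4*a*((hp + k*(p*(Y-X)+(ho-hp))) - hp)
       = (hp-ho)*((1-a) - k*(2*(1+a))) + (X-Y)*(((1-a) - k*(2*(1+a))) - 2*k*(p*((1+a)+(1-a)*N) - 2*a))"
      by (simp add: algebra_simps)
    have "DD sP n = (hP n - hO n)*((1-\<alpha>) - k*(2*(1+\<alpha>))) + (total N hP - total N hO)*(((1-\<alpha>) - k*(2*(1+\<alpha>))) - 2*k*(p*den - 2*\<alpha>))"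
      unfolding DD_def tsP TE h_sum[OF n, symmetric] den_def
      using gen[where a=\<alpha> and k=k and p=p and N="real N" and X="total N hP" and Y="total N hO" and hp="hP n" and ho="hO n"] by (simp add: sP_def)
    thus ?thesis using k den by simp
  qed
  have NEs: "is_NE bill_HP N E hP hO \<alpha> sP sO"
    by (rule NE_intro[OF fp, where D="DD sP" and A=AA]) (use dev[OF fp] Ds AA in auto)
  have uniq: "\<forall>n<N. lP n = sP n \<and> lO n = sO n" if ne: "is_NE bill_HP N E hP hO \<alpha> lP lO" for lP lO
  proof -
    have fpl: "feasible_profile N E lP lO" using ne by (simp add: is_NE_def)
    have key: "((1-\<alpha>) * (total N lP - total N sP) + (1+\<alpha>) * (lP n - sP n)) * (lP n - sP n) \<le> 0"
      if n: "n < N" for n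
    proof -
      have s01: "0 \<le> sP n" "sP n \<le> E n" using fp n sum_s[OF n]
        by (auto simp: feasible_profile_def feasible_user_def)
      have l01: "0 \<le> lP n" "lP n \<le> E n" using fpl n
        by (auto simp: feasible_profile_def feasible_user_def)
      have v1: "DD lP n * (sP n - lP n) \<ge> 0"
        by (rule NE_VI[OF ne n dev[OF fpl n] AA s01])
      have v2: "DD sP n * (lP n - sP n) \<ge> 0"
        by (rule NE_VI[OF NEs n dev[OF fp n] AA l01])
      have "(DD lP n - DD sP n) * (lP n - sP n) \<le> 0" using v1 v2 by (simp add: algebra_simps)
      moreover have "DD lP n - DD sP n = 2 * ((1-\<alpha>) * (total N lP - total N sP) + (1+\<alpha>) * (lP n - sP n))"
        unfolding DD_def by (simp add: algebra_simps)
      ultimately have "2 * (((1-\<alpha>) * (total N lP - total N sP) + (1+\<alpha>) * (lP n - sP n)) * (lP n - sP n)) \<le> 0"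
        by (metis mult.assoc)
      thus ?thesis by linarith
    qed
    have z: "\<forall>n<N. lP n - sP n = 0"
      by (rule delta_zero[where c="\<lambda>n. (1-\<alpha>)" and a="1+\<alpha>" and S="total N lP - total N sP"])
         (use key a0 a1 total_diff in auto)
    show ?thesis
    proof (intro allI impI conjI)
      fix n assume n: "n < N"
      show "lP n = sP n" using z n by simp
      have "lO n = E n - lP n" using fpl n by (auto simp: feasible_profile_def feasible_user_def)
      thus "lO n = sO n" using sum_s[OF n] z n by simp
    qed
  qed
  show ?thesis using NEs uniq by blast
qed


theorem theorem3:
  fixes N :: nat and E hP hO :: "nat \<Rightarrow> real"
  assumes E_pos: "\<And>n. n < N \<Longrightarrow> E n > 0"
    and hP_nonneg: "\<And>n. n < N \<Longrightarrow> hP n \<ge> 0"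
    and hO_nonneg: "\<And>n. n < N \<Longrightarrow> hO n \<ge> 0"
    and h_sum: "\<And>n. n < N \<Longrightarrow> hP n + hO n = E n"
    and peak: "total N hP \<ge> total N E / 2" "total N E / 2 \<ge> total N hO"
  shows
   "((\<forall>n<N. hP n / E n + 1/2 \<ge> total N hP / total N E) \<longrightarrow>
      (\<forall>\<alpha>. 0 < \<alpha> \<and> \<alpha> \<le> 1 \<longrightarrow>
         (let sP = (\<lambda>n. hP n + E n / total N E * ((1 - \<alpha>) / 2) * (total N hO - total N hP));
              sO = (\<lambda>n. hO n + E n / total N E * ((1 - \<alpha>) / 2) * (total N hP - total N hO))
          in is_NE bill_DP N E hP hO \<alpha> sP sO \<and>
             (\<forall>lP lO. is_NE bill_DP N E hP hO \<alpha> lP lO \<longrightarrow>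
                (\<forall>n<N. lP n = sP n \<and> lO n = sO n)))) \<and>
      (\<forall>lP lO. feasible_profile N E lP lO \<and> total N lP = total N E / 2 \<longrightarrow>
         is_NE bill_DP N E hP hO 0 lP lO))
    \<and>
    ((\<forall>n<N. 2 * (real N - 1) * hP n \<ge> (total N hP - total N hO) - E n) \<longrightarrow>
      (\<forall>\<alpha>. 0 \<le> \<alpha> \<and> \<alpha> \<le> 1 \<longrightarrow>
         0 \<le> phi N \<alpha> \<and> phi N \<alpha> \<le> 1 \<and>
         (let sP = (\<lambda>n. hP n + (1 - \<alpha>) / (2 * (1 + \<alpha>)) *
                        (phi N \<alpha> * (total N hO - total N hP) + (hO n - hP n)));
              sO = (\<lambda>n. hO n + (1 - \<alpha>) / (2 * (1 + \<alpha>)) *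
                        (phi N \<alpha> * (total N hP - total N hO) + (hP n - hO n)))
          in is_NE bill_HP N E hP hO \<alpha> sP sO \<and>
             (\<forall>lP lO. is_NE bill_HP N E hP hO \<alpha> lP lO \<longrightarrow>
                (\<forall>n<N. lP n = sP n \<and> lO n = sO n)))))"
proof -
  have P1: "(\<forall>n<N. hP n / E n + 1/2 \<ge> total N hP / total N E) \<longrightarrow>
      (\<forall>\<alpha>. 0 < \<alpha> \<and> \<alpha> \<le> 1 \<longrightarrow>
         (let sP = (\<lambda>n. hP n + E n / total N E * ((1 - \<alpha>) / 2) * (total N hO - total N hP));
              sO = (\<lambda>n. hO n + E n / total N E * ((1 - \<alpha>) / 2) * (total N hP - total N hO))
          in is_NE bill_DP N E hP hO \<alpha> sP sO \<and>
             (\<forall>lP lO. is_NE bill_DP N E hP hO \<alpha> lP lO \<longrightarrow>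
                (\<forall>n<N. lP n = sP n \<and> lO n = sO n)))) \<and>
      (\<forall>lP lO. feasible_profile N E lP lO \<and> total N lP = total N E / 2 \<longrightarrow>
         is_NE bill_DP N E hP hO 0 lP lO)"
  proof (intro impI conjI allI)
    fix \<alpha> :: real
    assume H: "\<forall>n<N. hP n / E n + 1/2 \<ge> total N hP / total N E" and a: "0 < \<alpha> \<and> \<alpha> \<le> 1"
    show "let sP = (\<lambda>n. hP n + E n / total N E * ((1 - \<alpha>) / 2) * (total N hO - total N hP));
              sO = (\<lambda>n. hO n + E n / total N E * ((1 - \<alpha>) / 2) * (total N hP - total N hO))
          in is_NE bill_DP N E hP hO \<alpha> sP sO \<and>
             (\<forall>lP lO. is_NE bill_DP N E hP hO \<alpha> lP lO \<longrightarrow>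
                (\<forall>n<N. lP n = sP n \<and> lO n = sO n))"
      unfolding Let_def
      by (rule part1a[OF E_pos hP_nonneg hO_nonneg h_sum peak H _ _ refl refl]) (use a in auto)
  next
    fix lP lO :: "nat \<Rightarrow> real"
    assume "feasible_profile N E lP lO \<and> total N lP = total N E / 2"
    thus "is_NE bill_DP N E hP hO 0 lP lO"
      using part1b[where N=N and E=E and hP=hP and hO=hO and lP=lP and lO=lO] E_pos h_sum by blast
  qed
  have P2: "(\<forall>n<N. 2 * (real N - 1) * hP n \<ge> (total N hP - total N hO) - E n) \<longrightarrow>
      (\<forall>\<alpha>. 0 \<le> \<alpha> \<and> \<alpha> \<le> 1 \<longrightarrow>
         0 \<le> phi N \<alpha> \<and> phi N \<alpha> \<le> 1 \<and>
         (let sP = (\<lambda>n. hP n + (1 - \<alpha>) / (2 * (1 + \<alpha>)) *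
                        (phi N \<alpha> * (total N hO - total N hP) + (hO n - hP n)));
              sO = (\<lambda>n. hO n + (1 - \<alpha>) / (2 * (1 + \<alpha>)) *
                        (phi N \<alpha> * (total N hP - total N hO) + (hP n - hO n)))
          in is_NE bill_HP N E hP hO \<alpha> sP sO \<and>
             (\<forall>lP lO. is_NE bill_HP N E hP hO \<alpha> lP lO \<longrightarrow>
                (\<forall>n<N. lP n = sP n \<and> lO n = sO n))))"
  proof (intro impI allI conjI)
    fix \<alpha> :: real
    assume H: "\<forall>n<N. 2 * (real N - 1) * hP n \<ge> (total N hP - total N hO) - E n" and a: "0 \<le> \<alpha> \<and> \<alpha> \<le> 1"
    show "0 \<le> phi N \<alpha>" "phi N \<alpha> \<le> 1" using phi_facts[of \<alpha>] a by auto
    show "let sP = (\<lambda>n. hP n + (1 - \<alpha>) / (2 * (1 + \<alpha>)) *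
                        (phi N \<alpha> * (total N hO - total N hP) + (hO n - hP n)));
              sO = (\<lambda>n. hO n + (1 - \<alpha>) / (2 * (1 + \<alpha>)) *
                        (phi N \<alpha> * (total N hP - total N hO) + (hP n - hO n)))
          in is_NE bill_HP N E hP hO \<alpha> sP sO \<and>
             (\<forall>lP lO. is_NE bill_HP N E hP hO \<alpha> lP lO \<longrightarrow>
                (\<forall>n<N. lP n = sP n \<and> lO n = sO n))"
      unfolding Let_def
      by (rule part2[OF E_pos hP_nonneg hO_nonneg h_sum peak H _ _ refl refl refl refl]) (use a in auto)
  qed
  show ?thesis using P1 P2 by blast
qed

end
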